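(* Let $\sigma,\eta>0$ and $\mathscr{C}$ be a family of balls as in the context, and assume there is $\kappa>0$ such that $|B|^{1/3}\ge\kappa|x_B|$ for all $B\in\mathscr{C}$ with $|x_B|$ sufficiently large. Then there exists $L=L(\eta,\kappa)\ge2$ such that, for every sufficiently large $n$, every $B\in\mathscr{C}$ intersecting $B(0,2n)\setminus B(0,n)$ satisfies $B\subset B(0,Ln)$ and $|x_B|\ge L^{-1}n$. In particular, for every sufficiently large $n$ there are at most $\frac{4\pi}{3}\sigma L^6\kappa^{-3}$ balls $B\in\mathscr{C}$ intersecting $B(0,2n)\setminus B(0,n)$.
   Context: Cover: for constants $\sigma,\eta>0$, $\mathscr{C}$ is a family of closed balls in $\mathbb{R}^3$ with $\bigcup_{B\in\mathscr{C}}B=\mathbb{R}^3$ and $|B|\geq 4\pi/3$ for all $B\in\mathscr{C}$, such that (i) each ball in $\mathscr{C}$ intersects at most $\sigma$ balls in $\mathscr{C}$, and (ii) if $B,B'\in\mathscr{C}$ intersect then $\eta^{-1}\le |B|^{1/3}/|B'|^{1/3}\le\eta$. $|B|$ is the volume and $x_B$ the center of $B$; $B(0,r)$ is the ball of radius $r$ centered at the origin. *)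

theory Defs
  imports "HOL-Analysis.Analysis"
begin

type_synonym ball3 = "(real ^ 3) \<times> real"

definition ball_set :: "ball3 \<Rightarrow> (real ^ 3) set" where
  "ball_set B = cball (fst B) (snd B)"

definition ball_vol :: "ball3 \<Rightarrow> real" where
  "ball_vol B = measure lebesgue (ball_set B)"

definition ball_ctr :: "ball3 \<Rightarrow> real ^ 3" where
  "ball_ctr B = fst B"

definition is_cover :: "real \<Rightarrow> real \<Rightarrow> ball3 set \<Rightarrow> bool" where
  "is_cover \<sigma> \<eta> \<C> \<longleftrightarrow>
     \<sigma> > 0 \<and> \<eta> > 0 \<and>
     (\<Union>B\<in>\<C>. ball_set B) = UNIV \<and>
     (\<forall>B\<in>\<C>. ball_vol B \<ge> 4 * pi / 3) \<and>
     (\<forall>B\<in>\<C>. finite {B'\<in>\<C>. ball_set B \<inter> ball_set B' \<noteq> {}} \<and>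
              real (card {B'\<in>\<C>. ball_set B \<inter> ball_set B' \<noteq> {}}) \<le> \<sigma>) \<and>
     (\<forall>B\<in>\<C>. \<forall>B'\<in>\<C>. ball_set B \<inter> ball_set B' \<noteq> {} \<longrightarrow>
        inverse \<eta> \<le> ball_vol B powr (1/3) / ball_vol B' powr (1/3) \<and>
        ball_vol B powr (1/3) / ball_vol B' powr (1/3) \<le> \<eta>)"

end

theory Submission imports Defs begin


lemma sub_ball:
  fixes c p :: "'a::real_normed_vector"
  assumes "0 < R" "R \<le> \<rho>" "p \<in> cball c \<rho>"
  defines "u \<equiv> p + (R/\<rho>) *\<^sub>R (c - p)"
  shows "dist u p \<le> R" "cball u R \<subseteq> cball c \<rho>"
proof -
  have rp: "\<rho> > 0" using assms by simp
  have np: "norm (c - p) \<le> \<rho>" using assms(3) by (simp add: dist_norm)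
  have "dist u p = (R/\<rho>) * norm (c - p)" using rp assms(1) by (simp add: u_def dist_norm)
  also have "\<dots> \<le> (R/\<rho>) * \<rho>" using np rp assms(1) by (intro mult_left_mono) auto
  finally show "dist u p \<le> R" using rp by simp
  have uc: "u - c = (1 - R/\<rho>) *\<^sub>R (p - c)" by (simp add: u_def algebra_simps)
  have "dist u c = (1 - R/\<rho>) * norm (p - c)"
    using rp assms(2) by (simp add: dist_norm uc)
  also have "\<dots> \<le> (1 - R/\<rho>) * \<rho>" using np rp assms(2)
    by (intro mult_left_mono) (auto simp: norm_minus_commute)
  also have "\<dots> = \<rho> - R" using rp by (simp add: field_simps)
  finally have duc: "dist u c \<le> \<rho> - R" .
  show "cball u R \<subseteq> cball c \<rho>"
  proof
    fix z assume "z \<in> cball u R"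
    then have "dist u z \<le> R" by simp
    then have "dist c z \<le> \<rho>" using duc dist_triangle[of c z u] by (simp add: dist_commute)
    then show "z \<in> cball c \<rho>" by simp
  qed
qed



lemma cube_root: "(x::real) \<ge> 0 \<Longrightarrow> (x^3) powr (1/3) = x"
proof (cases "x = 0")
  case False
  assume "x \<ge> 0" then have "x > 0" using False by simp
  then have "x^3 = x powr 3" by (simp add: powr_realpow)
  then have "(x^3) powr (1/3) = x powr (3 * (1/3))" by (simp only: powr_powr)
  then show ?thesis using \<open>x>0\<close> by simp
qed simp



lemma vol_cball: "r \<ge> 0 \<Longrightarrow> measure lebesgue (cball (c::real^3) r) = 4/3*pi*r^3"
  using content_cball[of r c] unit_ball_vol_3 by (simp add: measure_completion)

lemma vol_ball: "r \<ge> 0 \<Longrightarrow> measure lebesgue (ball (c::real^3) r) = 4/3*pi*r^3"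
  using content_ball[of r c] unit_ball_vol_3 by (simp add: measure_completion)

lemma ball_vol_eq: "snd B \<ge> 0 \<Longrightarrow> ball_vol B = 4/3*pi*(snd B)^3"
  unfolding ball_vol_def ball_set_def by (rule vol_cball)

lemma ball_vol_neg: "snd B < 0 \<Longrightarrow> ball_vol B = 0"
  by (simp add: ball_vol_def ball_set_def)

lemma cbrt_vol: "snd B \<ge> 0 \<Longrightarrow> ball_vol B powr (1/3) = (4/3*pi) powr (1/3) * snd B"
proof -
  assume h: "snd B \<ge> 0"
  have "ball_vol B powr (1/3) = (4/3*pi) powr (1/3) * ((snd B)^3) powr (1/3)"
    using h by (simp add: ball_vol_eq powr_mult[symmetric])
  also have "((snd B)^3) powr (1/3) = snd B"
    using h by (rule cube_root)
  finally show ?thesis .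
qed

lemma cov_rad:
  assumes "is_cover \<sigma> \<eta> C" "B \<in> C" shows "snd B \<ge> 1"
proof -
  have v: "ball_vol B \<ge> 4*pi/3" using assms by (auto simp: is_cover_def)
  have "snd B \<ge> 0"
  proof (rule ccontr)
    assume "\<not> snd B \<ge> 0" then have "ball_vol B = 0" by (intro ball_vol_neg) simp
    then show False using v pi_gt_zero by linarith
  qed
  then have "4/3*pi*(snd B)^3 \<ge> 4/3*pi*1" using v ball_vol_eq by simp
  then have "(snd B)^3 \<ge> 1^3" using pi_gt_zero by simp
  show ?thesis
  proof (rule ccontr)
    assume "\<not> 1 \<le> snd B"
    then have "(snd B)^3 < 1^3" using \<open>snd B \<ge> 0\<close> by (intro power_strict_mono) auto
    then show False using \<open>(snd B)^3 \<ge> 1^3\<close> by simp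
  qed
qed

lemma cov_ratio:
  assumes "is_cover \<sigma> \<eta> C" "B \<in> C" "B' \<in> C" "ball_set B \<inter> ball_set B' \<noteq> {}"
  shows "snd B \<le> \<eta> * snd B'"
proof -
  have r: "snd B \<ge> 1" "snd B' \<ge> 1" using cov_rad assms by auto
  have "ball_vol B powr (1/3) / ball_vol B' powr (1/3) \<le> \<eta>"
    using assms unfolding is_cover_def by blast
  moreover have "ball_vol B powr (1/3) / ball_vol B' powr (1/3) = snd B / snd B'"
    using r by (simp add: cbrt_vol)
  ultimately show ?thesis using r by (simp add: divide_le_eq)
qed

lemma cov_eta: assumes "is_cover \<sigma> \<eta> C" shows "\<eta> \<ge> 1"
proof -
  obtain B where "B \<in> C" using assms unfolding is_cover_def by blast
  moreover have "ball_set B \<noteq> {}" using cov_rad[OF assms \<open>B\<in>C\<close>] by (simp add: ball_set_def)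
  ultimately have "snd B \<le> \<eta> * snd B" using cov_ratio[OF assms] by auto
  then show ?thesis using cov_rad[OF assms \<open>B\<in>C\<close>] by simp
qed

lemma cov_point: assumes "is_cover \<sigma> \<eta> C" obtains B where "B \<in> C" "x \<in> ball_set B"
  using assms unfolding is_cover_def by blast

lemma cov_nbfin: assumes "is_cover \<sigma> \<eta> C" "B \<in> C"
  shows "finite {B'\<in>C. ball_set B \<inter> ball_set B' \<noteq> {}}"
    "real (card {B'\<in>C. ball_set B \<inter> ball_set B' \<noteq> {}}) \<le> \<sigma>"
  using assms unfolding is_cover_def by blast+

lemma cov_pointfin: assumes "is_cover \<sigma> \<eta> C"
  shows "finite {B\<in>C. w \<in> ball_set B}"
proof -
  obtain B0 where B0: "B0 \<in> C" "w \<in> ball_set B0" using cov_point[OF assms] by blast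
  have "{B\<in>C. w \<in> ball_set B} \<subseteq> {B'\<in>C. ball_set B0 \<inter> ball_set B' \<noteq> {}}" using B0 by auto
  then show ?thesis using cov_nbfin(1)[OF assms B0(1)] finite_subset by blast
qed

lemma cov_locfin:
  assumes "is_cover \<sigma> \<eta> C" "S \<subseteq> cball (0::real^3) D"
  shows "finite {B\<in>C. ball_set B \<inter> S \<noteq> {}}"
proof -
  have "compact (cball (0::real^3) (D+1))" by simp
  have "\<exists>W. W \<subseteq> cball (0::real^3) (D+1) \<and> finite W \<and> cball 0 (D+1) \<subseteq> (\<Union>w\<in>W. ball w (1::real))"
proof -
  have cov: "cball 0 (D+1) \<subseteq> (\<Union>c\<in>cball (0::real^3) (D+1). ball c 1)"
  proof
    fix x :: "real^3" assume "x \<in> cball 0 (D+1)"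
    moreover have "x \<in> ball x 1" by simp
    ultimately show "x \<in> (\<Union>c\<in>cball 0 (D+1). ball c 1)" by blast
  qed
  show ?thesis
  proof (rule compactE_image[OF compact_cball _ cov])
    show "\<And>T. T \<in> cball 0 (D+1) \<Longrightarrow> open (ball T 1)" by simp
  next
    fix W assume "W \<subseteq> cball (0::real^3) (D+1)" "finite W" "cball 0 (D+1) \<subseteq> (\<Union>c\<in>W. ball c 1)"
    then show ?thesis by (intro exI[of _ W] conjI)
  qed
qed
  then obtain W where W: "W \<subseteq> cball (0::real^3) (D+1)" "finite W" "cball 0 (D+1) \<subseteq> (\<Union>w\<in>W. ball w 1)"
    by (elim exE conjE) (rule that; assumption)
  have "{B\<in>C. ball_set B \<inter> S \<noteq> {}} \<subseteq> (\<Union>w\<in>W. {B\<in>C. w \<in> ball_set B})"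
  proof
    fix B assume "B \<in> {B\<in>C. ball_set B \<inter> S \<noteq> {}}"
    then obtain p where B: "B \<in> C" "p \<in> ball_set B" "p \<in> S" by auto
    define u where "u = p + (1/snd B) *\<^sub>R (fst B - p)"
    have r: "snd B \<ge> 1" using cov_rad[OF assms(1) B(1)] .
    have pc: "p \<in> cball (fst B) (snd B)" using B(2) by (simp add: ball_set_def)
    have du: "dist u p \<le> 1" and sub: "cball u 1 \<subseteq> cball (fst B) (snd B)"
      using sub_ball[of 1 "snd B" p "fst B"] r pc unfolding u_def by auto
    have "norm p \<le> D" using B(3) assms(2) by auto
    then have "norm u \<le> D + 1" using du norm_triangle_ineq[of "u - p" p] by (simp add: dist_norm)
    then have "u \<in> cball 0 (D+1)" by simp
    then have "u \<in> (\<Union>w\<in>W. ball w 1)" by (rule subsetD[OF W(3)])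
    then obtain w where "w \<in> W" "u \<in> ball w 1" by (rule UN_E)
    then have "w \<in> cball u 1" by (simp add: dist_commute)
    then have "w \<in> ball_set B" using sub by (simp add: ball_set_def subset_iff)
    then have "B \<in> {B\<in>C. w \<in> ball_set B}" using B(1) by simp
    with \<open>w\<in>W\<close> show "B \<in> (\<Union>w\<in>W. {B\<in>C. w \<in> ball_set B})" by (rule UN_I)
  qed
  moreover have "finite (\<Union>w\<in>W. {B\<in>C. w \<in> ball_set B})"
    using W(2) by (intro finite_UN_I) (simp_all add: cov_pointfin[OF assms(1)])
  ultimately show ?thesis by (rule finite_subset)
qed


lemma disj_far:
  fixes u v :: "'a::real_normed_vector"
  assumes "cball u R \<inter> cball v R = {}" shows "dist u v > 2*R"
proof (rule ccontr)
  assume "\<not> dist u v > 2*R"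
  then have "dist u (midpoint u v) \<le> R" "dist v (midpoint u v) \<le> R"
    by (auto simp: dist_midpoint dist_commute)
  then show False using assms by auto
qed

lemma three_ident:
  fixes a b c :: "'a::real_inner"
  shows "(norm (a-b))^2 + (norm (b-c))^2 + (norm (c-a))^2 + (norm (a+b+c))^2
     = 3*((norm a)^2 + (norm b)^2 + (norm c)^2)"
  by (simp add: power2_norm_eq_inner inner_diff_left inner_diff_right inner_add_left
      inner_add_right inner_commute algebra_simps)

lemma arith_aux: "(x1::real) \<le> P \<Longrightarrow> x2 \<le> P \<Longrightarrow> x3 \<le> P \<Longrightarrow> Q < y1 \<Longrightarrow> Q < y2 \<Longrightarrow> Q < y3
  \<Longrightarrow> t > 0 \<Longrightarrow> P = 256*t \<Longrightarrow> Q = 784*t \<Longrightarrow> y1+y2+y3 \<le> 3*(x1+x2+x3) \<Longrightarrow> False"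
  by (smt (verit))

lemma three_pts:
  fixes a b c :: "'a::real_inner"
  assumes "m > 0" "norm a \<le> 16*m" "norm b \<le> 16*m" "norm c \<le> 16*m"
    "dist a b > 28*m" "dist b c > 28*m" "dist c a > 28*m"
  shows False
proof -
  have s: "(norm (a-b))^2 + (norm (b-c))^2 + (norm (c-a))^2 \<le> 3*((norm a)^2 + (norm b)^2 + (norm c)^2)"
    using three_ident[of a b c] by (smt (verit) zero_le_power2)
  have "(norm a)^2 \<le> (16*m)^2" "(norm b)^2 \<le> (16*m)^2" "(norm c)^2 \<le> (16*m)^2"
    by (rule power_mono; use assms in simp)+
  moreover have "(norm (a-b))^2 > (28*m)^2" "(norm (b-c))^2 > (28*m)^2" "(norm (c-a))^2 > (28*m)^2"
    by (rule power_strict_mono; use assms in \<open>simp add: dist_norm\<close>)+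
  moreover have "m*m > 0" using assms(1) by simp
  moreover have "(16*m)^2 = 256*(m*m)" "(28*m)^2 = 784*(m*m)" by (simp_all add: power2_eq_square)
  ultimately show False using s arith_aux by blast
qed

lemma to_sub:
  fixes c p :: "'a::real_normed_vector"
  assumes "m > 0" "\<rho> \<ge> 14*m" "p \<in> cball c \<rho>" "norm p \<le> 2*m"
  obtains u where "norm u \<le> 16*m" "cball u (14*m) \<subseteq> cball c \<rho>"
proof -
  define u where "u = p + ((14*m)/\<rho>) *\<^sub>R (c - p)"
  have "dist u p \<le> 14*m" "cball u (14*m) \<subseteq> cball c \<rho>"
    using sub_ball[of "14*m" \<rho> p c] assms unfolding u_def by auto
  moreover have "norm u \<le> 16*m"
    using calculation(1) assms(4) norm_triangle_ineq[of "u-p" p] by (simp add: dist_norm)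
  ultimately show ?thesis using that by blast
qed

lemma three_balls:
  fixes c1 c2 c3 p1 p2 p3 :: "'a::real_inner"
  assumes "m > 0" "r1 \<ge> 14*m" "r2 \<ge> 14*m" "r3 \<ge> 14*m"
    "p1 \<in> cball c1 r1" "p2 \<in> cball c2 r2" "p3 \<in> cball c3 r3"
    "norm p1 \<le> 2*m" "norm p2 \<le> 2*m" "norm p3 \<le> 2*m"
    "cball c1 r1 \<inter> cball c2 r2 = {}" "cball c2 r2 \<inter> cball c3 r3 = {}" "cball c3 r3 \<inter> cball c1 r1 = {}"
  shows False
proof -
  obtain u1 where u1: "norm u1 \<le> 16*m" "cball u1 (14*m) \<subseteq> cball c1 r1" using to_sub assms by metis
  obtain u2 where u2: "norm u2 \<le> 16*m" "cball u2 (14*m) \<subseteq> cball c2 r2" using to_sub assms by metis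
  obtain u3 where u3: "norm u3 \<le> 16*m" "cball u3 (14*m) \<subseteq> cball c3 r3" using to_sub assms by metis
  have "cball u1 (14*m) \<inter> cball u2 (14*m) = {}" using u1 u2 assms(11) by blast
  then have d1: "dist u1 u2 > 28*m" using disj_far by fastforce
  have "cball u2 (14*m) \<inter> cball u3 (14*m) = {}" using u3 u2 assms(12) by blast
  then have d2: "dist u2 u3 > 28*m" using disj_far by fastforce
  have "cball u3 (14*m) \<inter> cball u1 (14*m) = {}" using u1 u3 assms(13) by blast
  then have d3: "dist u3 u1 > 28*m" using disj_far by fastforce
  show False using three_pts[OF assms(1) u1(1) u2(1) u3(1) d1 d2 d3] .
qed

lemma cov_ivt:
  assumes cov: "is_cover \<sigma> \<eta> C" and y: "norm y \<le> D"
    and By: "B \<in> C" "y \<in> ball_set B" "snd B \<ge> T"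
    and zero: "\<forall>B\<in>C. 0 \<in> ball_set B \<longrightarrow> snd B < T/\<eta>"
  shows "\<exists>E\<in>C. ball_set E \<inter> closed_segment 0 y \<noteq> {} \<and> T/\<eta> \<le> snd E \<and> snd E < T"
proof (rule ccontr)
  assume nm: "\<not> ?thesis"
  have eta: "\<eta> \<ge> 1" using cov_eta[OF cov] .
  define S where "S = closed_segment (0::real^3) y"
  have D0: "D \<ge> 0" using y norm_ge_zero[of y] by linarith
  have "S \<subseteq> cball 0 D" unfolding S_def
    using y D0 by (intro closed_segment_subset) auto
  then have finF: "finite {E\<in>C. ball_set E \<inter> S \<noteq> {}}" using cov_locfin[OF cov] by blast
  define A where "A = \<Union>(ball_set ` {E\<in>{E\<in>C. ball_set E \<inter> S \<noteq> {}}. snd E \<ge> T})"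
  define Sm where "Sm = \<Union>(ball_set ` {E\<in>{E\<in>C. ball_set E \<inter> S \<noteq> {}}. snd E < T/\<eta>})"
  have f1: "finite {E\<in>{E\<in>C. ball_set E \<inter> S \<noteq> {}}. snd E \<ge> T}"
    by (rule finite_subset[OF _ finF]) auto
  have f2: "finite {E\<in>{E\<in>C. ball_set E \<inter> S \<noteq> {}}. snd E < T/\<eta>}"
    by (rule finite_subset[OF _ finF]) auto
  have clA: "closed A" unfolding A_def using f1
    by (intro closed_Union finite_imageI) (auto simp: ball_set_def)
  have clS: "closed Sm" unfolding Sm_def using f2
    by (intro closed_Union finite_imageI) (auto simp: ball_set_def)
  have cov1: "S \<subseteq> A \<union> Sm"
  proof
    fix z assume z: "z \<in> S"
    obtain E where E: "E \<in> C" "z \<in> ball_set E" using cov_point[OF cov] by blast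
    have "ball_set E \<inter> closed_segment 0 y \<noteq> {}" using E z unfolding S_def by blast
    then have "\<not> (T/\<eta> \<le> snd E \<and> snd E < T)" using nm E(1) by blast
    then have "snd E \<ge> T \<or> snd E < T/\<eta>" by linarith
    have EF: "E \<in> {E\<in>C. ball_set E \<inter> S \<noteq> {}}" using E z by auto
    then show "z \<in> A \<union> Sm"
    proof (cases "snd E \<ge> T")
      case True
      then have "E \<in> {E\<in>{E\<in>C. ball_set E \<inter> S \<noteq> {}}. snd E \<ge> T}" using EF by simp
      then have "z \<in> A" unfolding A_def using E(2) by (rule UN_I)
      then show ?thesis by simp
    next
      case False
      then have "snd E < T/\<eta>" using \<open>snd E \<ge> T \<or> snd E < T/\<eta>\<close> by simp
      then have "E \<in> {E\<in>{E\<in>C. ball_set E \<inter> S \<noteq> {}}. snd E < T/\<eta>}" using EF by simp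
      then have "z \<in> Sm" unfolding Sm_def using E(2) by (rule UN_I)
      then show ?thesis by simp
    qed
  qed
  have disj: "A \<inter> Sm \<inter> S = {}"
  proof (rule ccontr)
    assume "A \<inter> Sm \<inter> S \<noteq> {}"
    then obtain z where "z \<in> A" "z \<in> Sm" by blast
    from \<open>z \<in> A\<close> obtain E1 where E1: "E1 \<in> {E\<in>{E\<in>C. ball_set E \<inter> S \<noteq> {}}. snd E \<ge> T}" "z \<in> ball_set E1"
      unfolding A_def by (rule UN_E)
    from \<open>z \<in> Sm\<close> obtain E2 where E2: "E2 \<in> {E\<in>{E\<in>C. ball_set E \<inter> S \<noteq> {}}. snd E < T/\<eta>}" "z \<in> ball_set E2"
      unfolding Sm_def by (rule UN_E)
    have "E1 \<in> C" "E2 \<in> C" "snd E1 \<ge> T" "snd E2 < T/\<eta>" using E1(1) E2(1) by auto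
    moreover have "ball_set E1 \<inter> ball_set E2 \<noteq> {}" using E1(2) E2(2) by blast
    ultimately have "snd E1 \<le> \<eta> * snd E2" using cov_ratio[OF cov] by simp
    also have "\<dots> < \<eta> * (T/\<eta>)" using \<open>snd E2 < T/\<eta>\<close> eta by (intro mult_strict_left_mono) auto
    also have "\<dots> = T" using eta by simp
    finally show False using \<open>snd E1 \<ge> T\<close> by simp
  qed
  have yS: "y \<in> S" unfolding S_def by simp
  have "B \<in> {E\<in>{E\<in>C. ball_set E \<inter> S \<noteq> {}}. snd E \<ge> T}" using By yS by auto
  then have "y \<in> A" unfolding A_def using By(2) by (rule UN_I)
  then have nA: "A \<inter> S \<noteq> {}" using yS by blast
  obtain E0 where E0: "E0 \<in> C" "0 \<in> ball_set E0" using cov_point[OF cov] by blast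
  have zS: "0 \<in> S" unfolding S_def by simp
  have "E0 \<in> {E\<in>{E\<in>C. ball_set E \<inter> S \<noteq> {}}. snd E < T/\<eta>}" using E0 zero zS by auto
  then have "0 \<in> Sm" unfolding Sm_def using E0(2) by (rule UN_I)
  then have nS: "Sm \<inter> S \<noteq> {}" using zS by blast
  have "connected S" unfolding S_def by simp
  moreover have "\<exists>A' B'. closed A' \<and> closed B' \<and> S \<subseteq> A' \<union> B' \<and> A' \<inter> B' \<inter> S = {} \<and> A' \<inter> S \<noteq> {} \<and> B' \<inter> S \<noteq> {}"
    by (intro exI[of _ A] exI[of _ Sm] conjI) (fact clA clS cov1 disj nA nS)+
  ultimately show False unfolding connected_closed by (simp only: not_True_eq_False)
qed

lemma seg_norm: "q \<in> closed_segment (0::real^3) p \<Longrightarrow> norm q \<le> norm p"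
proof -
  assume q: "q \<in> closed_segment (0::real^3) p"
  have "closed_segment (0::real^3) p \<subseteq> cball 0 (norm p)"
    by (intro closed_segment_subset) auto
  then show ?thesis using q by auto
qed

lemma cov_radbound:
  assumes cov: "is_cover \<sigma> \<eta> C" and m: "m > 0"
    and zero: "\<forall>B\<in>C. 0 \<in> ball_set B \<longrightarrow> snd B < 14*m"
    and B: "B \<in> C" "p \<in> ball_set B" "norm p \<le> 2*m"
  shows "snd B < 14*\<eta>^4*m"
proof (rule ccontr)
  assume "\<not> ?thesis"
  then have rB: "snd B \<ge> 14*\<eta>^4*m" by simp
  define r where "r = snd B"
  have e: "\<eta> \<ge> 1" using cov_eta[OF cov] .
  have e2: "\<eta>^2 \<ge> 1" "\<eta>^3 \<ge> 1" "\<eta>^4 \<ge> 1" using e by (simp_all add: one_le_power)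
  have rpos: "r > 0" using cov_rad[OF cov B(1)] unfolding r_def by simp
  have r4: "r/\<eta>^4 \<ge> 14*m" using rB e2(3) unfolding r_def by (subst pos_le_divide_eq) (auto simp: algebra_simps)
  have r42: "r/\<eta>^4 \<le> r/\<eta>^2"
    using rpos e by (intro divide_left_mono) (auto intro!: power_increasing)
  have p4: "\<eta>^4 = \<eta>^3 * \<eta>" by (simp add: eval_nat_numeral)
  have q1: "(r/\<eta>)/\<eta> = r/\<eta>^2" "(r/\<eta>^3)/\<eta> = r/\<eta>^4"
    by (simp_all only: divide_divide_eq_left p4 power2_eq_square)
  have "r/\<eta> \<le> r" using rpos e by (simp add: field_simps)
  have "r/\<eta>^3 \<le> r/1" using rpos e2 e by (intro divide_left_mono) auto
  then have "r/\<eta>^3 \<le> r" by simp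
  have z1: "\<forall>B\<in>C. 0 \<in> ball_set B \<longrightarrow> snd B < (r/\<eta>)/\<eta>"
  proof (intro ballI impI)
    fix B' assume "B' \<in> C" "0 \<in> ball_set B'"
    then have "snd B' < 14*m" using zero by blast
    then show "snd B' < (r/\<eta>)/\<eta>" using r4 r42 q1(1) by linarith
  qed
  have z2: "\<forall>B\<in>C. 0 \<in> ball_set B \<longrightarrow> snd B < (r/\<eta>^3)/\<eta>"
  proof (intro ballI impI)
    fix B' assume "B' \<in> C" "0 \<in> ball_set B'"
    then have "snd B' < 14*m" using zero by blast
    then show "snd B' < (r/\<eta>^3)/\<eta>" using r4 q1(2) by linarith
  qed
  have t1: "snd B \<ge> r/\<eta>" using \<open>r/\<eta> \<le> r\<close> unfolding r_def .
  have t3: "snd B \<ge> r/\<eta>^3" using \<open>r/\<eta>^3 \<le> r\<close> unfolding r_def .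
  obtain E2 where E2: "E2 \<in> C" "ball_set E2 \<inter> closed_segment 0 p \<noteq> {}"
     "(r/\<eta>)/\<eta> \<le> snd E2" "snd E2 < r/\<eta>"
    using cov_ivt[OF cov B(3) B(1) B(2) t1 z1] by (elim bexE conjE) (rule that; assumption)
  obtain E3 where E3: "E3 \<in> C" "ball_set E3 \<inter> closed_segment 0 p \<noteq> {}"
     "(r/\<eta>^3)/\<eta> \<le> snd E3" "snd E3 < r/\<eta>^3"
    using cov_ivt[OF cov B(3) B(1) B(2) t3 z2] by (elim bexE conjE) (rule that; assumption)
  obtain p2 where p2': "p2 \<in> ball_set E2" "p2 \<in> closed_segment 0 p" using E2(2) by blast
  have p2: "p2 \<in> ball_set E2" "norm p2 \<le> 2*m" using p2' seg_norm[OF p2'(2)] B(3) by auto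
  obtain p3 where p3': "p3 \<in> ball_set E3" "p3 \<in> closed_segment 0 p" using E3(2) by blast
  have p3: "p3 \<in> ball_set E3" "norm p3 \<le> 2*m" using p3' seg_norm[OF p3'(2)] B(3) by auto
  have d12: "ball_set B \<inter> ball_set E2 = {}"
  proof (rule ccontr)
    assume "ball_set B \<inter> ball_set E2 \<noteq> {}"
    then have "r \<le> \<eta> * snd E2" using cov_ratio[OF cov B(1) E2(1)] unfolding r_def by simp
    also have "\<dots> < \<eta> * (r/\<eta>)" using E2(4) e by (intro mult_strict_left_mono) auto
    finally show False using e by simp
  qed
  have d23: "ball_set E2 \<inter> ball_set E3 = {}"
  proof (rule ccontr)
    assume "ball_set E2 \<inter> ball_set E3 \<noteq> {}"
    then have "snd E2 \<le> \<eta> * snd E3" using cov_ratio[OF cov E2(1) E3(1)] by simp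
    also have "\<dots> < \<eta> * (r/\<eta>^3)" using E3(4) e by (intro mult_strict_left_mono) auto
    also have "\<dots> = (r/\<eta>)/\<eta>" using e by (simp add: power2_eq_square power3_eq_cube field_simps)
    finally show False using E2(3) by simp
  qed
  have d31: "ball_set E3 \<inter> ball_set B = {}"
  proof (rule ccontr)
    assume "ball_set E3 \<inter> ball_set B \<noteq> {}"
    then have "ball_set B \<inter> ball_set E3 \<noteq> {}" by blast
    then have "r \<le> \<eta> * snd E3" using cov_ratio[OF cov B(1) E3(1)] unfolding r_def by simp
    also have "\<dots> < \<eta> * (r/\<eta>^3)" using E3(4) e by (intro mult_strict_left_mono) auto
    also have "\<dots> \<le> r" using e2 rpos e by (simp add: power2_eq_square power3_eq_cube field_simps)
    finally show False by simp
  qed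
  have s2: "snd E2 \<ge> 14*m" using E2(3) q1(1) r4 r42 by linarith
  have s3: "snd E3 \<ge> 14*m" using E3(3) q1(2) r4 by linarith
  have "r/\<eta>^4 \<le> r/1" using rpos e2 e by (intro divide_left_mono) auto
  then have s1: "r \<ge> 14*m" using r4 by simp
  have i1: "p \<in> cball (fst B) (snd B)" "p2 \<in> cball (fst E2) (snd E2)" "p3 \<in> cball (fst E3) (snd E3)"
    using B(2) p2(1) p3(1) by (simp_all add: ball_set_def)
  have j: "cball (fst B) (snd B) \<inter> cball (fst E2) (snd E2) = {}"
    "cball (fst E2) (snd E2) \<inter> cball (fst E3) (snd E3) = {}"
    "cball (fst E3) (snd E3) \<inter> cball (fst B) (snd B) = {}"
    using d12 d23 d31 by (simp_all add: ball_set_def)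
  show False
    by (rule three_balls[OF m s1[unfolded r_def] s2 s3 i1 B(3) p2(2) p3(2) j])
qed

lemma greedy:
  assumes "finite S" "\<forall>B\<in>S. ball_set B \<noteq> {}"
    "\<forall>B\<in>S. real (card {B'\<in>S. ball_set B \<inter> ball_set B' \<noteq> {}}) \<le> \<sigma>"
  shows "\<exists>I\<subseteq>S. pairwise (\<lambda>B B'. disjnt (ball_set B) (ball_set B')) I \<and> real (card S) \<le> \<sigma> * real (card I)"
  using assms
proof (induction "card S" arbitrary: S rule: less_induct)
  case less
  show ?case
  proof (cases "S = {}")
    case True then show ?thesis by auto
  next
    case False
    then obtain B where BS: "B \<in> S" by blast
    define N where "N = {B'\<in>S. ball_set B \<inter> ball_set B' \<noteq> {}}"
    define S' where "S' = S - N"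
    have BN: "B \<in> N" using BS less.prems(2) unfolding N_def by auto
    have fN: "finite N" "N \<subseteq> S" using less.prems(1) unfolding N_def by auto
    have fS': "finite S'" using less.prems(1) unfolding S'_def by auto
    have "S' \<subset> S" using BS BN unfolding S'_def by auto
    then have lt: "card S' < card S" using less.prems(1) by (rule psubset_card_mono[rotated])
    have h3: "\<forall>B\<in>S'. real (card {B'\<in>S'. ball_set B \<inter> ball_set B' \<noteq> {}}) \<le> \<sigma>"
    proof
      fix B0 assume "B0 \<in> S'"
      then have "B0 \<in> S" unfolding S'_def by auto
      have "card {B'\<in>S'. ball_set B0 \<inter> ball_set B' \<noteq> {}} \<le> card {B'\<in>S. ball_set B0 \<inter> ball_set B' \<noteq> {}}"
        using less.prems(1) unfolding S'_def by (intro card_mono) auto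
      then show "real (card {B'\<in>S'. ball_set B0 \<inter> ball_set B' \<noteq> {}}) \<le> \<sigma>"
        using less.prems(3) \<open>B0\<in>S\<close> by (meson of_nat_le_iff order_trans)
    qed
    have h2: "\<forall>B\<in>S'. ball_set B \<noteq> {}" using less.prems(2) unfolding S'_def by auto
    obtain I' where I': "I' \<subseteq> S'" "pairwise (\<lambda>B B'. disjnt (ball_set B) (ball_set B')) I'"
      "real (card S') \<le> \<sigma> * real (card I')"
      using less.hyps[OF lt fS' h2 h3] by (elim exE conjE) (rule that; assumption)
    have BI': "B \<notin> I'" using I'(1) BN unfolding S'_def by auto
    have fI': "finite I'" using I'(1) fS' finite_subset by blast
    have c1: "card S' = card S - card N" unfolding S'_def using fN by (rule card_Diff_subset)
    have c2: "card N \<le> card S" using fN less.prems(1) by (intro card_mono) auto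
    have cS: "card S = card N + card S'" using c1 c2 by simp
    have cN: "real (card N) \<le> \<sigma>" using bspec[OF less.prems(3) BS] unfolding N_def .
    have cI: "card (insert B I') = card I' + 1" using BI' fI' by simp
    have dB: "\<forall>y\<in>I'. disjnt (ball_set B) (ball_set y) \<and> disjnt (ball_set y) (ball_set B)"
    proof
      fix y assume "y \<in> I'"
      then have "y \<notin> N" "y \<in> S" using I'(1) unfolding S'_def by auto
      then have "ball_set B \<inter> ball_set y = {}" unfolding N_def by auto
      then show "disjnt (ball_set B) (ball_set y) \<and> disjnt (ball_set y) (ball_set B)"
        by (auto simp: disjnt_def)
    qed
    have pw: "pairwise (\<lambda>B B'. disjnt (ball_set B) (ball_set B')) (insert B I')"
      unfolding pairwise_insert using I'(2) dB by blast
    show ?thesis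
    proof (intro exI[of _ "insert B I'"] conjI)
      show "insert B I' \<subseteq> S" using BS I'(1) unfolding S'_def by auto
      show "pairwise (\<lambda>B B'. disjnt (ball_set B) (ball_set B')) (insert B I')" by (rule pw)
      have "real (card S) = real (card N) + real (card S')" using cS by simp
      also have "\<dots> \<le> \<sigma> + \<sigma> * real (card I')" using cN I'(3) by simp
      also have "\<dots> = \<sigma> * real (card (insert B I'))" using cI by (simp add: algebra_simps)
      finally show "real (card S) \<le> \<sigma> * real (card (insert B I'))" .
    qed
  qed
qed

lemma packing:
  assumes "finite I" "pairwise (\<lambda>B B'. disjnt (ball_set B) (ball_set B')) I"
    "\<forall>B\<in>I. ball_set B \<subseteq> ball (0::real^3) Rr" "\<forall>B\<in>I. ball_vol B \<ge> v"
  shows "real (card I) * v \<le> measure lebesgue (ball (0::real^3) Rr)"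
proof -
  have "real (card I) * v = (\<Sum>B\<in>I. v)" by simp
  also have "\<dots> \<le> (\<Sum>B\<in>I. ball_vol B)" using assms(4) by (intro sum_mono) auto
  also have "\<dots> = measure lebesgue (\<Union>B\<in>I. ball_set B)" unfolding ball_vol_def
    using assms(1,2) by (intro measure_UNION'[symmetric]) (auto simp: ball_set_def)
  also have "\<dots> \<le> measure lebesgue (ball (0::real^3) Rr)"
  proof (rule measure_mono_fmeasurable)
    show "(\<Union>B\<in>I. ball_set B) \<subseteq> ball 0 Rr" using assms(3) by blast
    show "(\<Union>B\<in>I. ball_set B) \<in> sets lebesgue"
      using assms(1) by (intro sets.finite_UN) (auto simp: ball_set_def intro!: fmeasurableD)
  qed simp
  finally show ?thesis .
qed

lemma cube_of_cbrt: "(v::real) \<ge> 0 \<Longrightarrow> (v powr (1/3))^3 = v"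
proof (cases "v = 0")
  case False
  assume "v \<ge> 0" then have "v > 0" using False by simp
  then have "(v powr (1/3))^3 = v powr ((1/3) * 3)"
    by (simp add: powr_realpow[symmetric] powr_powr del: powr_realpow)
  then show ?thesis using \<open>v > 0\<close> by simp
qed simp

lemma key_ball:
  assumes cov: "is_cover \<sigma> \<eta> C" and m: "m > 0"
    and zero: "\<forall>B\<in>C. 0 \<in> ball_set B \<longrightarrow> snd B < 14*m"
    and zero2: "\<forall>B\<in>C. 0 \<in> ball_set B \<longrightarrow> 2 * snd B < m"
    and B: "B \<in> C" "p \<in> ball_set B" "norm p < 2*m" "\<not> norm p < m"
  shows "ball_set B \<subseteq> ball 0 ((2 + 28*\<eta>^4)*m)" "norm (ball_ctr B) > m/2"
proof -
  have rb: "snd B < 14*\<eta>^4*m" using cov_radbound[OF cov m zero B(1,2)] B(3) by simp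
  have px: "dist (fst B) p \<le> snd B" using B(2) by (simp add: ball_set_def)
  have n0: "0 \<notin> ball_set B"
  proof
    assume "0 \<in> ball_set B"
    then have "2 * snd B < m" using zero2 B(1) by blast
    moreover have "norm (fst B) \<le> snd B" using \<open>0 \<in> ball_set B\<close> by (simp add: ball_set_def)
    moreover have "norm p \<le> norm (fst B) + dist (fst B) p"
      using norm_triangle_ineq[of "fst B" "p - fst B"] by (simp add: dist_norm norm_minus_commute)
    ultimately show False using px B(4) by linarith
  qed
  then have xr: "norm (fst B) > snd B" by (simp add: ball_set_def)
  have pn: "norm p \<le> norm (fst B) + dist (fst B) p"
      using norm_triangle_ineq[of "fst B" "p - fst B"] by (simp add: dist_norm norm_minus_commute)
  show "norm (ball_ctr B) > m/2" using pn px xr B(4) by (simp add: ball_ctr_def)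
  show "ball_set B \<subseteq> ball 0 ((2 + 28*\<eta>^4)*m)"
  proof
    fix q assume "q \<in> ball_set B"
    then have "dist (fst B) q \<le> snd B" by (simp add: ball_set_def)
    moreover have "norm q \<le> norm (fst B) + dist (fst B) q"
      using norm_triangle_ineq[of "fst B" "q - fst B"] by (simp add: dist_norm norm_minus_commute)
    moreover have "norm (fst B) \<le> norm p + dist (fst B) p"
      using norm_triangle_ineq[of p "fst B - p"] by (simp add: dist_norm norm_minus_commute)
    ultimately have "norm q < 2*m + 28*\<eta>^4*m" using px rb B(3) by linarith
    then show "q \<in> ball 0 ((2 + 28*\<eta>^4)*m)" by (simp add: algebra_simps)
  qed
qed

theorem lemma5p5:
  fixes \<eta> \<kappa> :: real
  assumes "\<eta> > 0" and "\<kappa> > 0"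
  shows "\<exists>L\<ge>2. \<forall>(\<sigma>::real) (\<C>::ball3 set).
     is_cover \<sigma> \<eta> \<C> \<longrightarrow>
     (\<exists>R. \<forall>B\<in>\<C>. norm (ball_ctr B) \<ge> R \<longrightarrow>
            ball_vol B powr (1/3) \<ge> \<kappa> * norm (ball_ctr B)) \<longrightarrow>
     (\<exists>N::nat. \<forall>n\<ge>N.
        (\<forall>B\<in>\<C>. ball_set B \<inter> (ball 0 (2 * real n) - ball 0 (real n)) \<noteq> {} \<longrightarrow>
             ball_set B \<subseteq> ball 0 (L * real n) \<and> norm (ball_ctr B) \<ge> real n / L) \<and>
        finite {B\<in>\<C>. ball_set B \<inter> (ball 0 (2 * real n) - ball 0 (real n)) \<noteq> {}} \<and>
        real (card {B\<in>\<C>. ball_set B \<inter> (ball 0 (2 * real n) - ball 0 (real n)) \<noteq> {}})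
          \<le> 4 * pi / 3 * \<sigma> * L ^ 6 / \<kappa> ^ 3)"
proof -
  define L where "L = 2 + 28*\<eta>^4"
  have L2: "L \<ge> 2" unfolding L_def by simp
  have L3: "L^3 \<ge> 8" using power_mono[OF L2, of 3] by simp
  show ?thesis
  proof (intro exI[of _ L] conjI allI impI)
    show "L \<ge> 2" by (rule L2)
    fix \<sigma> :: real and C :: "ball3 set"
    assume cov: "is_cover \<sigma> \<eta> C"
      and hk: "\<exists>R. \<forall>B\<in>C. norm (ball_ctr B) \<ge> R \<longrightarrow> ball_vol B powr (1/3) \<ge> \<kappa> * norm (ball_ctr B)"
    obtain R where R: "\<forall>B\<in>C. norm (ball_ctr B) \<ge> R \<longrightarrow> ball_vol B powr (1/3) \<ge> \<kappa> * norm (ball_ctr B)"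
      using hk by blast
    have sig: "\<sigma> > 0" using cov by (simp add: is_cover_def)
    obtain B0 where B0: "B0 \<in> C" "0 \<in> ball_set B0" using cov_point[OF cov] by blast
    define r0 where "r0 = snd B0"
    have r0: "r0 \<ge> 1" using cov_rad[OF cov B0(1)] unfolding r0_def .
    have zg: "\<forall>B\<in>C. 0 \<in> ball_set B \<longrightarrow> snd B \<le> \<eta>*r0"
    proof (intro ballI impI)
      fix B assume "B \<in> C" "0 \<in> ball_set B"
      then have "ball_set B \<inter> ball_set B0 \<noteq> {}" using B0(2) by blast
      then show "snd B \<le> \<eta>*r0" using cov_ratio[OF cov \<open>B\<in>C\<close> B0(1)] unfolding r0_def by simp
    qed
    have er: "\<eta>*r0 > 0" using assms(1) r0 by simp
    define N where "N = nat \<lceil>2*\<eta>*r0 + 2*\<bar>R\<bar> + 1\<rceil>"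
    show "\<exists>N::nat. \<forall>n\<ge>N.
        (\<forall>B\<in>C. ball_set B \<inter> (ball 0 (2 * real n) - ball 0 (real n)) \<noteq> {} \<longrightarrow>
             ball_set B \<subseteq> ball 0 (L * real n) \<and> norm (ball_ctr B) \<ge> real n / L) \<and>
        finite {B\<in>C. ball_set B \<inter> (ball 0 (2 * real n) - ball 0 (real n)) \<noteq> {}} \<and>
        real (card {B\<in>C. ball_set B \<inter> (ball 0 (2 * real n) - ball 0 (real n)) \<noteq> {}})
          \<le> 4 * pi / 3 * \<sigma> * L ^ 6 / \<kappa> ^ 3"
    proof (intro exI[of _ N] allI impI)
      fix n :: nat assume nN: "N \<le> n"
      have "real N \<ge> 2*\<eta>*r0 + 2*\<bar>R\<bar> + 1" unfolding N_def by linarith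
      then have mb: "real n \<ge> 2*\<eta>*r0 + 2*\<bar>R\<bar> + 1" using nN by linarith
      have m: "real n > 0" using mb er by linarith
      have zero: "\<forall>B\<in>C. 0 \<in> ball_set B \<longrightarrow> snd B < 14*real n"
        using zg mb er by fastforce
      have zero2: "\<forall>B\<in>C. 0 \<in> ball_set B \<longrightarrow> 2 * snd B < real n"
        using zg mb er by fastforce
      define Ann where "Ann = ball (0::real^3) (2 * real n) - ball 0 (real n)"
      define S where "S = {B\<in>C. ball_set B \<inter> Ann \<noteq> {}}"
      have K: "ball_set B \<subseteq> ball 0 (L * real n) \<and> norm (ball_ctr B) > real n / 2"
        if "B \<in> S" for B
      proof -
        from that obtain p where p: "B \<in> C" "p \<in> ball_set B" "p \<in> Ann" unfolding S_def by blast
        then have "norm p < 2 * real n" "\<not> norm p < real n" unfolding Ann_def by auto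
        from key_ball[OF cov m zero zero2 p(1,2) this] show ?thesis unfolding L_def by simp
      qed
      have part1: "\<forall>B\<in>C. ball_set B \<inter> (ball 0 (2 * real n) - ball 0 (real n)) \<noteq> {} \<longrightarrow>
             ball_set B \<subseteq> ball 0 (L * real n) \<and> norm (ball_ctr B) \<ge> real n / L"
      proof (intro ballI impI)
        fix B assume "B \<in> C" "ball_set B \<inter> (ball 0 (2 * real n) - ball 0 (real n)) \<noteq> {}"
        then have "B \<in> S" unfolding S_def Ann_def by blast
        note KB = K[OF this]
        have "real n / L \<le> real n / 2" using L2 m by (intro divide_left_mono) auto
        then show "ball_set B \<subseteq> ball 0 (L * real n) \<and> norm (ball_ctr B) \<ge> real n / L"
          using KB by linarith
      qed
      have AnnS: "Ann \<subseteq> cball 0 (2 * real n)" unfolding Ann_def by auto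
      have finS: "finite S" unfolding S_def by (rule cov_locfin[OF cov AnnS])
      have ne: "\<forall>B\<in>S. ball_set B \<noteq> {}"
      proof
        fix B assume "B \<in> S"
        then have "snd B \<ge> 1" using cov_rad[OF cov] unfolding S_def by blast
        then show "ball_set B \<noteq> {}" by (simp add: ball_set_def)
      qed
      have nb: "\<forall>B\<in>S. real (card {B'\<in>S. ball_set B \<inter> ball_set B' \<noteq> {}}) \<le> \<sigma>"
      proof
        fix B assume "B \<in> S"
        then have BC: "B \<in> C" unfolding S_def by blast
        have "card {B'\<in>S. ball_set B \<inter> ball_set B' \<noteq> {}} \<le> card {B'\<in>C. ball_set B \<inter> ball_set B' \<noteq> {}}"
          using cov_nbfin(1)[OF cov BC] unfolding S_def by (intro card_mono) auto
        then show "real (card {B'\<in>S. ball_set B \<inter> ball_set B' \<noteq> {}}) \<le> \<sigma>"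
          using cov_nbfin(2)[OF cov BC] by linarith
      qed
      obtain I where I: "I \<subseteq> S" "pairwise (\<lambda>B B'. disjnt (ball_set B) (ball_set B')) I"
          "real (card S) \<le> \<sigma> * real (card I)"
        using greedy[OF finS ne nb] by (elim exE conjE) (rule that; assumption)
      have finI: "finite I" using I(1) finS finite_subset by blast
      have sub: "\<forall>B\<in>I. ball_set B \<subseteq> ball (0::real^3) (L * real n)" using I(1) K by blast
      have vol: "\<forall>B\<in>I. ball_vol B \<ge> (\<kappa> * real n / 2)^3"
      proof
        fix B assume "B \<in> I"
        then have BS: "B \<in> S" using I(1) by blast
        then have BC: "B \<in> C" unfolding S_def by blast
        have nx: "norm (ball_ctr B) > real n / 2" using K[OF BS] by simp
        have "real n / 2 \<ge> R" using mb er abs_ge_self[of R] by linarith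
        then have "ball_vol B powr (1/3) \<ge> \<kappa> * norm (ball_ctr B)" using R BC nx by simp
        moreover have "\<kappa> * norm (ball_ctr B) \<ge> \<kappa> * (real n / 2)"
          using nx assms(2) by (intro mult_left_mono) auto
        ultimately have c: "ball_vol B powr (1/3) \<ge> \<kappa> * real n / 2" by simp
        have le: "(\<kappa> * real n / 2)^3 \<le> (ball_vol B powr (1/3))^3"
          using c assms(2) m by (intro power_mono) auto
        have "snd B \<ge> 1" using cov_rad[OF cov BC] .
        then have "ball_vol B = 4/3*pi*(snd B)^3" using ball_vol_eq[of B] by simp
        moreover have "4/3*pi*(snd B)^3 \<ge> 0" using \<open>snd B \<ge> 1\<close> by simp
        ultimately have "ball_vol B \<ge> 0" by simp
        then have "(ball_vol B powr (1/3))^3 = ball_vol B" by (rule cube_of_cbrt)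
        then show "ball_vol B \<ge> (\<kappa> * real n / 2)^3" using le by simp
      qed
      have cI: "real (card I) * (\<kappa> * real n / 2)^3 \<le> 4/3*pi*(L * real n)^3"
        using packing[OF finI I(2) sub vol] vol_ball[of "L * real n" 0] L2 m by simp
      have e1: "(\<kappa> * real n / 2)^3 = (\<kappa>^3/8) * (real n)^3"
        by (simp add: power_mult_distrib power_divide)
      have e2: "4/3*pi*(L * real n)^3 = (4/3*pi*L^3) * (real n)^3"
        by (simp add: power_mult_distrib)
      have n3: "(real n)^3 > 0" using m by simp
      have "(real (card I) * (\<kappa>^3/8)) * (real n)^3 \<le> (4/3*pi*L^3) * (real n)^3"
        using cI e1 e2 by (simp add: mult.assoc)
      then have "real (card I) * (\<kappa>^3/8) \<le> 4/3*pi*L^3"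
        using n3 by (simp only: mult_le_cancel_right_pos)
      then have cI2: "real (card I) \<le> (4/3*pi*L^3) * 8 / \<kappa>^3"
        using assms(2) by (simp add: field_simps)
      have "real (card S) \<le> \<sigma> * real (card I)" by (rule I(3))
      also have "\<dots> \<le> \<sigma> * ((4/3*pi*L^3) * 8 / \<kappa>^3)"
        using cI2 sig by (intro mult_left_mono) auto
      also have "\<dots> \<le> \<sigma> * ((4/3*pi*L^3) * L^3 / \<kappa>^3)"
        using L3 sig assms(2) L2 by (intro mult_left_mono divide_right_mono mult_left_mono) auto
      also have "\<dots> = 4 * pi / 3 * \<sigma> * L ^ 6 / \<kappa> ^ 3"
        by (simp add: field_simps power_add[symmetric])
      finally have part3: "real (card S) \<le> 4 * pi / 3 * \<sigma> * L ^ 6 / \<kappa> ^ 3" .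
      show "(\<forall>B\<in>C. ball_set B \<inter> (ball 0 (2 * real n) - ball 0 (real n)) \<noteq> {} \<longrightarrow>
             ball_set B \<subseteq> ball 0 (L * real n) \<and> norm (ball_ctr B) \<ge> real n / L) \<and>
        finite {B\<in>C. ball_set B \<inter> (ball 0 (2 * real n) - ball 0 (real n)) \<noteq> {}} \<and>
        real (card {B\<in>C. ball_set B \<inter> (ball 0 (2 * real n) - ball 0 (real n)) \<noteq> {}})
          \<le> 4 * pi / 3 * \<sigma> * L ^ 6 / \<kappa> ^ 3"
        using part1 finS part3 unfolding S_def Ann_def by blast
    qed
  qed
qed
end
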